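(* Let $((F,\boxplus,\boxdot),(F,\cdot))$ be a left near-vector space (the vector set and the scalar group having the same underlying set $F$) such that $F\boxdot 1=\{\alpha\boxdot1:\alpha\in F\}=F$. Then for every $\gamma\in F\setminus\{0\}$, $\gamma$ lies in the quasi-kernel, the operation $\boxplus_\gamma:=+_\gamma$ on $F$ is well-defined, $(F,\boxplus_\gamma,\cdot)$ is a left near-field, and $((F,\boxplus,\boxdot),(F,\cdot))$ is isomorphic as a near-vector space to the canonical near-vector space $((F,\boxplus_\gamma,\cdot),(F,\cdot))$.
   Context: A scalar group is a tuple $(F,\cdot,1,0,-1)$ where $(F,\cdot,1)$ is a monoid, $0\ne1$, $0\alpha=\alpha0=0$, $\{1,-1\}$ is exactly the solution set of $x^2=1$, and $(F\setminus\{0\},\cdot)$ is a group. A left near-field $(F,+,\cdot)$ is a set with a group operation $+$ (identity $0$), an associative multiplication such that $(F\setminus\{0\},\cdot)$ is a group and $0\cdot\alpha=0$, and the left distributive law $\gamma(\alpha+\beta)=\gamma\alpha+\gamma\beta$. A (left) near-vector space is a pair $((V,\boxplus,\boxdot),(F,\cdot))$ where $(F,\cdot)$ is a scalar group, $(V,\boxplus)$ an abelian group, and $\boxdot:F\times V\to V$ satisfies $1\boxdot v=v$, $\alpha\boxdot(\beta\boxdot v)=(\alpha\beta)\boxdot v$, $\alpha\boxdot(v\boxplus w)=\alpha\boxdot v\boxplus\alpha\boxdot w$, $(-1)\boxdot v=\boxminus v$, $0\boxdot v=0$, freeness ($\alpha\boxdot v=\beta\boxdot v$ implies $v=0$ or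 $\alpha=\beta$), and the quasi-kernel $Q(V)=\{v\in V:\forall\alpha,\beta\in F\ \exists\gamma\in F,\ \alpha\boxdot v\boxplus\beta\boxdot v=\gamma\boxdot v\}$ generates $(V,\boxplus)$. For $u\in Q(V)\setminus\{0\}$, $\alpha+_u\beta$ denotes the unique $\gamma\in F$ with $\alpha\boxdot u\boxplus\beta\boxdot u=\gamma\boxdot u$. An isomorphism $(\Psi,\varphi)$ from $((V_1,\boxplus_1,\boxdot_1),(F_1,\cdot_1))$ to $((V_2,\boxplus_2,\boxdot_2),(F_2,\cdot_2))$ consists of an additive bijection $\Psi:V_1\to V_2$ and a group isomorphism $\varphi:(F_1\setminus\{0\},\cdot_1)\to(F_2\setminus\{0\},\cdot_2)$ with $\Psi(\alpha\boxdot_1u)=\varphi(\alpha)\boxdot_2\Psi(u)$ for all $u\in V_1$, $\alpha\in F_1\setminus\{0\}$. The canonical near-vector space of a left near-field $(F,+,\cdot)$ is $((F,+,\cdot),(F,\cdot))$, the action being the multiplication. *)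

theory Defs
  imports "HOL-Algebra.Algebra"
begin

definition scalar_group :: "'a set \<Rightarrow> ('a \<Rightarrow> 'a \<Rightarrow> 'a) \<Rightarrow> 'a \<Rightarrow> 'a \<Rightarrow> 'a \<Rightarrow> bool" where
  "scalar_group F mul sone szero neg1 \<longleftrightarrow>
     monoid \<lparr>carrier = F, monoid.mult = mul, one = sone\<rparr> \<and>
     szero \<in> F \<and> neg1 \<in> F \<and> szero \<noteq> sone \<and>
     (\<forall>a\<in>F. mul szero a = szero \<and> mul a szero = szero) \<and>
     {x \<in> F. mul x x = sone} = {sone, neg1} \<and>
     group \<lparr>carrier = F - {szero}, monoid.mult = mul, one = sone\<rparr>"

definition vec_grp :: "'v set \<Rightarrow> ('v \<Rightarrow> 'v \<Rightarrow> 'v) \<Rightarrow> 'v \<Rightarrow> 'v monoid" where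
  "vec_grp V vadd vzero = \<lparr>carrier = V, monoid.mult = vadd, one = vzero\<rparr>"

definition quasi_kernel :: "'v set \<Rightarrow> ('v \<Rightarrow> 'v \<Rightarrow> 'v) \<Rightarrow> ('a \<Rightarrow> 'v \<Rightarrow> 'v) \<Rightarrow> 'a set \<Rightarrow> 'v set" where
  "quasi_kernel V vadd smul F =
     {v \<in> V. \<forall>\<alpha>\<in>F. \<forall>\<beta>\<in>F. \<exists>\<gamma>\<in>F. vadd (smul \<alpha> v) (smul \<beta> v) = smul \<gamma> v}"

definition near_vector_space ::
  "'v set \<Rightarrow> ('v \<Rightarrow> 'v \<Rightarrow> 'v) \<Rightarrow> 'v \<Rightarrow> ('a \<Rightarrow> 'v \<Rightarrow> 'v) \<Rightarrow>
   'a set \<Rightarrow> ('a \<Rightarrow> 'a \<Rightarrow> 'a) \<Rightarrow> 'a \<Rightarrow> 'a \<Rightarrow> 'a \<Rightarrow> bool" where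
  "near_vector_space V vadd vzero smul F mul sone szero neg1 \<longleftrightarrow>
     scalar_group F mul sone szero neg1 \<and>
     comm_group (vec_grp V vadd vzero) \<and>
     (\<forall>\<alpha>\<in>F. \<forall>v\<in>V. smul \<alpha> v \<in> V) \<and>
     (\<forall>v\<in>V. smul sone v = v) \<and>
     (\<forall>\<alpha>\<in>F. \<forall>\<beta>\<in>F. \<forall>v\<in>V. smul \<alpha> (smul \<beta> v) = smul (mul \<alpha> \<beta>) v) \<and>
     (\<forall>\<alpha>\<in>F. \<forall>v\<in>V. \<forall>w\<in>V. smul \<alpha> (vadd v w) = vadd (smul \<alpha> v) (smul \<alpha> w)) \<and>
     (\<forall>v\<in>V. smul neg1 v = inv\<^bsub>vec_grp V vadd vzero\<^esub> v) \<and>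
     (\<forall>v\<in>V. smul szero v = vzero) \<and>
     (\<forall>\<alpha>\<in>F. \<forall>\<beta>\<in>F. \<forall>v\<in>V. smul \<alpha> v = smul \<beta> v \<longrightarrow> v = vzero \<or> \<alpha> = \<beta>) \<and>
     generate (vec_grp V vadd vzero) (quasi_kernel V vadd smul F) = V"

definition qk_plus :: "('v \<Rightarrow> 'v \<Rightarrow> 'v) \<Rightarrow> ('a \<Rightarrow> 'v \<Rightarrow> 'v) \<Rightarrow> 'a set \<Rightarrow> 'v \<Rightarrow> 'a \<Rightarrow> 'a \<Rightarrow> 'a" where
  "qk_plus vadd smul F u \<alpha> \<beta> = (THE \<gamma>. \<gamma> \<in> F \<and> vadd (smul \<alpha> u) (smul \<beta> u) = smul \<gamma> u)"

definition left_near_field :: "'a set \<Rightarrow> ('a \<Rightarrow> 'a \<Rightarrow> 'a) \<Rightarrow> ('a \<Rightarrow> 'a \<Rightarrow> 'a) \<Rightarrow> 'a \<Rightarrow> bool" where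
  "left_near_field F pls mul szero \<longleftrightarrow>
     group \<lparr>carrier = F, monoid.mult = pls, one = szero\<rparr> \<and>
     (\<forall>a\<in>F. \<forall>b\<in>F. mul a b \<in> F) \<and>
     (\<forall>a\<in>F. \<forall>b\<in>F. \<forall>c\<in>F. mul (mul a b) c = mul a (mul b c)) \<and>
     (\<exists>e. group \<lparr>carrier = F - {szero}, monoid.mult = mul, one = e\<rparr>) \<and>
     (\<forall>a\<in>F. mul szero a = szero) \<and>
     (\<forall>a\<in>F. \<forall>b\<in>F. \<forall>c\<in>F. mul c (pls a b) = pls (mul c a) (mul c b))"

definition nvs_iso ::
  "('v \<Rightarrow> 'w) \<Rightarrow> ('a \<Rightarrow> 'b) \<Rightarrow>
   'v set \<Rightarrow> ('v \<Rightarrow> 'v \<Rightarrow> 'v) \<Rightarrow> ('a \<Rightarrow> 'v \<Rightarrow> 'v) \<Rightarrow> 'a set \<Rightarrow> ('a \<Rightarrow> 'a \<Rightarrow> 'a) \<Rightarrow> 'a \<Rightarrow>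
   'w set \<Rightarrow> ('w \<Rightarrow> 'w \<Rightarrow> 'w) \<Rightarrow> ('b \<Rightarrow> 'w \<Rightarrow> 'w) \<Rightarrow> 'b set \<Rightarrow> ('b \<Rightarrow> 'b \<Rightarrow> 'b) \<Rightarrow> 'b \<Rightarrow> bool" where
  "nvs_iso \<Psi> \<phi> V1 vadd1 smul1 F1 mul1 szero1 V2 vadd2 smul2 F2 mul2 szero2 \<longleftrightarrow>
     bij_betw \<Psi> V1 V2 \<and>
     (\<forall>u\<in>V1. \<forall>v\<in>V1. \<Psi> (vadd1 u v) = vadd2 (\<Psi> u) (\<Psi> v)) \<and>
     bij_betw \<phi> (F1 - {szero1}) (F2 - {szero2}) \<and>
     (\<forall>a\<in>F1 - {szero1}. \<forall>b\<in>F1 - {szero1}. \<phi> (mul1 a b) = mul2 (\<phi> a) (\<phi> b)) \<and>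
     (\<forall>u\<in>V1. \<forall>\<alpha>\<in>F1 - {szero1}. \<Psi> (smul1 \<alpha> u) = smul2 (\<phi> \<alpha>) (\<Psi> u))"

definition nvs_isomorphic ::
  "'v set \<Rightarrow> ('v \<Rightarrow> 'v \<Rightarrow> 'v) \<Rightarrow> ('a \<Rightarrow> 'v \<Rightarrow> 'v) \<Rightarrow> 'a set \<Rightarrow> ('a \<Rightarrow> 'a \<Rightarrow> 'a) \<Rightarrow> 'a \<Rightarrow>
   'w set \<Rightarrow> ('w \<Rightarrow> 'w \<Rightarrow> 'w) \<Rightarrow> ('b \<Rightarrow> 'w \<Rightarrow> 'w) \<Rightarrow> 'b set \<Rightarrow> ('b \<Rightarrow> 'b \<Rightarrow> 'b) \<Rightarrow> 'b \<Rightarrow> bool" where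
  "nvs_isomorphic V1 vadd1 smul1 F1 mul1 szero1 V2 vadd2 smul2 F2 mul2 szero2 \<longleftrightarrow>
     (\<exists>\<Psi> \<phi>. nvs_iso \<Psi> \<phi> V1 vadd1 smul1 F1 mul1 szero1 V2 vadd2 smul2 F2 mul2 szero2)"

end

theory Submission
  imports Defs
begin

locale nv8 =
  fixes F :: "'a set" and mul vadd smul :: "'a \<Rightarrow> 'a \<Rightarrow> 'a"
    and sone szero neg1 vzero :: 'a
  assumes nvs: "near_vector_space F vadd vzero smul F mul sone szero neg1"
    and span: "{smul \<alpha> sone | \<alpha>. \<alpha> \<in> F} = F"
begin

lemma sg: "scalar_group F mul sone szero neg1" using nvs unfolding near_vector_space_def by blast

lemma VG: "comm_group (vec_grp F vadd vzero)" using nvs unfolding near_vector_space_def by blast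

lemma M: "monoid \<lparr>carrier = F, monoid.mult = mul, one = sone\<rparr>" using sg unfolding scalar_group_def by blast
lemma Gs: "group \<lparr>carrier = F - {szero}, monoid.mult = mul, one = sone\<rparr>" using sg unfolding scalar_group_def by blast

lemma szF: "szero \<in> F" and n1F: "neg1 \<in> F" and szmul: "\<And>a. a \<in> F \<Longrightarrow> mul szero a = szero \<and> mul a szero = szero"
  using sg unfolding scalar_group_def by blast+

lemma smul_closed: "\<alpha> \<in> F \<Longrightarrow> v \<in> F \<Longrightarrow> smul \<alpha> v \<in> F" using nvs unfolding near_vector_space_def by blast
lemma smul_one: "v \<in> F \<Longrightarrow> smul sone v = v" using nvs unfolding near_vector_space_def by blast
lemma smul_assoc: "\<alpha> \<in> F \<Longrightarrow> \<beta> \<in> F \<Longrightarrow> v \<in> F \<Longrightarrow> smul \<alpha> (smul \<beta> v) = smul (mul \<alpha> \<beta>) v"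
  using nvs unfolding near_vector_space_def by blast
lemma smul_distr: "\<alpha> \<in> F \<Longrightarrow> v \<in> F \<Longrightarrow> w \<in> F \<Longrightarrow> smul \<alpha> (vadd v w) = vadd (smul \<alpha> v) (smul \<alpha> w)"
  using nvs unfolding near_vector_space_def by blast
lemma smul_neg: "v \<in> F \<Longrightarrow> smul neg1 v = inv\<^bsub>vec_grp F vadd vzero\<^esub> v"
  using nvs unfolding near_vector_space_def by blast
lemma smul_zero: "v \<in> F \<Longrightarrow> smul szero v = vzero"
  using nvs unfolding near_vector_space_def by blast
lemma free: "\<alpha> \<in> F \<Longrightarrow> \<beta> \<in> F \<Longrightarrow> v \<in> F \<Longrightarrow> smul \<alpha> v = smul \<beta> v \<Longrightarrow> v = vzero \<or> \<alpha> = \<beta>"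
  using nvs unfolding near_vector_space_def by blast

lemma VGg: "group (vec_grp F vadd vzero)" using VG unfolding comm_group_def by blast
lemma VGm: "monoid (vec_grp F vadd vzero)" using group.is_monoid[OF VGg] .

lemma carrV: "carrier (vec_grp F vadd vzero) = F" by (simp add: vec_grp_def)
lemma multV: "x \<otimes>\<^bsub>vec_grp F vadd vzero\<^esub> y = vadd x y" by (simp add: vec_grp_def)
lemma oneV: "\<one>\<^bsub>vec_grp F vadd vzero\<^esub> = vzero" by (simp add: vec_grp_def)

lemma vadd_closed: "x \<in> F \<Longrightarrow> y \<in> F \<Longrightarrow> vadd x y \<in> F"
  using VGm monoid.m_closed carrV multV by metis
lemma vadd_assoc: "x \<in> F \<Longrightarrow> y \<in> F \<Longrightarrow> z \<in> F \<Longrightarrow> vadd (vadd x y) z = vadd x (vadd y z)"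
  using VGm monoid.m_assoc carrV multV by metis
lemma vadd_comm: "x \<in> F \<Longrightarrow> y \<in> F \<Longrightarrow> vadd x y = vadd y x"
  using comm_group.axioms(1)[OF VG] comm_monoid.m_comm carrV multV by metis
lemma vzero_F: "vzero \<in> F"
  using VGm monoid.one_closed carrV oneV by metis
lemma vadd_zero: "x \<in> F \<Longrightarrow> vadd vzero x = x"
  using VGm monoid.l_one carrV multV oneV by metis
lemma vinv: "x \<in> F \<Longrightarrow> vadd (inv\<^bsub>vec_grp F vadd vzero\<^esub> x) x = vzero"
  using VGg group.l_inv carrV multV oneV by metis

lemma soneF: "sone \<in> F" using monoid.one_closed[OF M] by simp
lemma mul_closed: "a \<in> F \<Longrightarrow> b \<in> F \<Longrightarrow> mul a b \<in> F" using monoid.m_closed[OF M] by simp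
lemma mul_assoc: "a \<in> F \<Longrightarrow> b \<in> F \<Longrightarrow> c \<in> F \<Longrightarrow> mul (mul a b) c = mul a (mul b c)"
  using monoid.m_assoc[OF M] by simp
lemma mul_lone: "a \<in> F \<Longrightarrow> mul sone a = a" using monoid.l_one[OF M] by simp

lemma mul_inv: "a \<in> F \<Longrightarrow> a \<noteq> szero \<Longrightarrow> \<exists>a'\<in>F. mul a' a = sone"
  using group.l_inv_ex[OF Gs, of a] by auto

lemma orbit: "w \<in> F \<Longrightarrow> \<exists>a\<in>F. w = smul a sone" using span by blast

lemma smul_vzero: "\<alpha> \<in> F \<Longrightarrow> smul \<alpha> vzero = vzero"
proof -
  assume a: "\<alpha> \<in> F"
  have "vzero = smul szero sone" using smul_zero soneF by simp
  then have "smul \<alpha> vzero = smul (mul \<alpha> szero) sone" using smul_assoc a szF soneF by simp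
  also have "\<dots> = vzero" using szmul a smul_zero soneF by simp
  finally show ?thesis .
qed

lemma QV: assumes v: "v \<in> F" and a: "\<alpha> \<in> F" and b: "\<beta> \<in> F"
  shows "\<exists>c\<in>F. vadd (smul \<alpha> v) (smul \<beta> v) = smul c v"
proof (cases "v = vzero")
  case True
  then show ?thesis using smul_vzero a b vadd_zero vzero_F szF by (intro bexI[of _ szero]) auto
next
  case False
  obtain x where x: "x \<in> F" "v = smul x sone" using orbit v by blast
  have xz: "x \<noteq> szero" using False x smul_zero soneF by auto
  obtain x' where x': "x' \<in> F" "mul x' x = sone" using mul_inv x xz by blast
  have "vadd (smul \<alpha> v) (smul \<beta> v) \<in> F" using smul_closed vadd_closed a b v by simp
  then obtain c where c: "c \<in> F" "vadd (smul \<alpha> v) (smul \<beta> v) = smul c sone" using orbit by blast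
  have "smul x' v = sone" using x x' smul_assoc soneF smul_one by simp
  then have "smul c sone = smul (mul c x') v" using smul_assoc c x' v by metis
  then show ?thesis using c mul_closed x' by auto
qed

lemma QVall: "quasi_kernel F vadd smul F = F"
  unfolding quasi_kernel_def using QV by auto

end

locale nv8g = nv8 +
  fixes g :: 'a
  assumes gF: "g \<in> F" and gnz: "g \<noteq> vzero"
begin

lemma inj_e: "a \<in> F \<Longrightarrow> b \<in> F \<Longrightarrow> smul a g = smul b g \<Longrightarrow> a = b"
  using free gF gnz by blast

lemma surj_e: "w \<in> F \<Longrightarrow> \<exists>d\<in>F. w = smul d g"
proof -
  assume w: "w \<in> F"
  obtain x where x: "x \<in> F" "g = smul x sone" using orbit gF by blast
  have xz: "x \<noteq> szero" using gnz x smul_zero soneF by auto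
  obtain x' where x': "x' \<in> F" "mul x' x = sone" using mul_inv x xz by blast
  have s: "smul x' g = sone" using x x' smul_assoc soneF smul_one by simp
  obtain c where c: "c \<in> F" "w = smul c sone" using orbit w by blast
  then have "w = smul (mul c x') g" using s smul_assoc c x' gF by metis
  then show ?thesis using mul_closed c x' by blast
qed

definition Psi where "Psi w = (THE d. d \<in> F \<and> w = smul d g)"

lemma Psi: "w \<in> F \<Longrightarrow> Psi w \<in> F \<and> w = smul (Psi w) g"
  unfolding Psi_def
  apply (rule theI')
  using surj_e inj_e by blast

lemma Psi_in: "w \<in> F \<Longrightarrow> Psi w \<in> F" using Psi by blast
lemma Psi_s: "w \<in> F \<Longrightarrow> smul (Psi w) g = w" using Psi by metis

lemma Psi_e: "d \<in> F \<Longrightarrow> Psi (smul d g) = d"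
  using Psi[of "smul d g"] inj_e smul_closed gF by metis

abbreviation P where "P \<equiv> qk_plus vadd smul F g"

lemma P_eq: "P a b = Psi (vadd (smul a g) (smul b g))"
  unfolding qk_plus_def Psi_def by simp

lemma P: "a \<in> F \<Longrightarrow> b \<in> F \<Longrightarrow> P a b \<in> F \<and> smul (P a b) g = vadd (smul a g) (smul b g)"
  unfolding P_eq using Psi[of "vadd (smul a g) (smul b g)"] smul_closed vadd_closed gF by metis

lemma Pin: "a \<in> F \<Longrightarrow> b \<in> F \<Longrightarrow> P a b \<in> F" using P by blast
lemma Ps: "a \<in> F \<Longrightarrow> b \<in> F \<Longrightarrow> smul (P a b) g = vadd (smul a g) (smul b g)" using P by blast

lemma sg_closed: "a \<in> F \<Longrightarrow> smul a g \<in> F" using smul_closed gF by simp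

lemma cgP: "comm_group \<lparr>carrier = F, monoid.mult = P, one = szero\<rparr>"
proof (rule comm_groupI, simp_all)
  fix x y z assume xyz: "x \<in> F" "y \<in> F" "z \<in> F"
  show "P (P x y) z = P x (P y z)"
    by (rule inj_e) (use xyz in \<open>simp_all add: Pin Ps sg_closed vadd_assoc\<close>)
next
  fix x y assume xy: "x \<in> F" "y \<in> F"
  show "P x y \<in> F" using Pin xy .
  show "P x y = P y x"
    by (rule inj_e) (use xy in \<open>simp_all add: Pin Ps sg_closed vadd_comm\<close>)
next
  show "szero \<in> F" by (rule szF)
next
  fix x assume x: "x \<in> F"
  show "P szero x = x"
    by (rule inj_e) (use x in \<open>simp_all add: Pin Ps sg_closed szF smul_zero gF vadd_zero\<close>)
  have "P (mul neg1 x) x = szero"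
    apply (rule inj_e)
    using x by (simp_all add: Pin Ps sg_closed szF smul_zero gF mul_closed n1F smul_assoc[symmetric] smul_neg vinv)
  then show "\<exists>y\<in>F. P y x = szero" using mul_closed n1F x by blast
qed

lemma gP: "group \<lparr>carrier = F, monoid.mult = P, one = szero\<rparr>"
  using cgP unfolding comm_group_def by blast

lemma distr: "a \<in> F \<Longrightarrow> b \<in> F \<Longrightarrow> c \<in> F \<Longrightarrow> mul c (P a b) = P (mul c a) (mul c b)"
  apply (rule inj_e)
  by (simp_all add: Pin Ps sg_closed mul_closed smul_assoc[symmetric] gF smul_distr)

lemma lnf: "left_near_field F P mul szero"
  unfolding left_near_field_def
  using gP mul_closed mul_assoc Gs szmul distr by blast

lemma QP: "quasi_kernel F P mul F = F"
proof -
  have "v \<in> quasi_kernel F P mul F" if v: "v \<in> F" for v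
    unfolding quasi_kernel_def
  proof (safe intro!: v)
    fix \<alpha> \<beta> assume ab: "\<alpha> \<in> F" "\<beta> \<in> F"
    obtain c where c: "c \<in> F" "vadd (smul \<alpha> (smul v g)) (smul \<beta> (smul v g)) = smul c (smul v g)"
      using QV[OF sg_closed[OF v] ab] by blast
    have "P (mul \<alpha> v) (mul \<beta> v) = mul c v"
      apply (rule inj_e)
      using ab c v by (simp_all add: Pin Ps mul_closed gF smul_assoc[symmetric])
    then show "\<exists>\<gamma>\<in>F. P (mul \<alpha> v) (mul \<beta> v) = mul \<gamma> v" using c by blast
  qed
  then show ?thesis unfolding quasi_kernel_def by auto
qed

lemma nvsP: "near_vector_space F P szero mul F mul sone szero neg1"
proof -
  have cg: "comm_group (vec_grp F P szero)" using cgP by (simp add: vec_grp_def)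
  have cgg: "group (vec_grp F P szero)" using cg unfolding comm_group_def by blast
  have inv: "mul neg1 v = inv\<^bsub>vec_grp F P szero\<^esub> v" if v: "v \<in> F" for v
  proof -
    have "P (mul neg1 v) v = szero"
      apply (rule inj_e)
      using v by (simp_all add: Pin Ps sg_closed szF smul_zero gF mul_closed n1F smul_assoc[symmetric] smul_neg vinv)
    then show ?thesis
      using group.inv_equality[OF cgg, of "mul neg1 v" v] v mul_closed n1F
      by (simp add: vec_grp_def)
  qed
  have fr: "v = szero \<or> a = b" if "a \<in> F" "b \<in> F" "v \<in> F" "mul a v = mul b v" for a b v
  proof -
    have "smul a (smul v g) = smul b (smul v g)" using that by (simp add: smul_assoc gF)
    then have "smul v g = vzero \<or> a = b" using free that sg_closed by blast
    then show ?thesis using inj_e[of v szero] smul_zero gF szF that by auto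
  qed
  have gen: "generate (vec_grp F P szero) (quasi_kernel F P mul F) = F"
  proof
    have "generate (vec_grp F P szero) F \<subseteq> carrier (vec_grp F P szero)"
      by (rule group.generate_incl[OF cgg]) (simp add: vec_grp_def)
    then show "generate (vec_grp F P szero) (quasi_kernel F P mul F) \<subseteq> F"
      unfolding QP by (simp add: vec_grp_def)
    show "F \<subseteq> generate (vec_grp F P szero) (quasi_kernel F P mul F)"
    proof
      fix x assume "x \<in> F"
      then have "x \<in> quasi_kernel F P mul F" by (simp add: QP)
      then show "x \<in> generate (vec_grp F P szero) (quasi_kernel F P mul F)" by (rule generate.incl)
    qed
  qed
  show ?thesis unfolding near_vector_space_def
  proof (intro conjI ballI impI)
    show "scalar_group F mul sone szero neg1" by (rule sg)
    show "comm_group (vec_grp F P szero)" by (rule cg)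
    show "generate (vec_grp F P szero) (quasi_kernel F P mul F) = F" by (rule gen)
  qed (simp_all add: mul_closed mul_lone mul_assoc distr inv szmul fr)
qed

lemma Psi_inj: "inj_on Psi F"
proof (rule inj_onI)
  fix x y assume "x \<in> F" "y \<in> F" "Psi x = Psi y"
  then show "x = y" using Psi_s[of x] Psi_s[of y] by metis
qed

lemma Psi_img: "Psi ` F = F"
proof
  show "Psi ` F \<subseteq> F" using Psi_in by blast
  show "F \<subseteq> Psi ` F"
  proof
    fix d assume d: "d \<in> F"
    have "Psi (smul d g) = d" using Psi_e d by blast
    moreover have "smul d g \<in> F" using sg_closed d by blast
    ultimately show "d \<in> Psi ` F" by (metis image_eqI)
  qed
qed

lemma Psi_add: assumes uv: "u \<in> F" "v \<in> F" shows "Psi (vadd u v) = P (Psi u) (Psi v)"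
proof (rule inj_e)
  have pu: "Psi u \<in> F" "smul (Psi u) g = u" using Psi_in Psi_s uv by auto
  have pv: "Psi v \<in> F" "smul (Psi v) g = v" using Psi_in Psi_s uv by auto
  have w: "vadd u v \<in> F" using vadd_closed uv by blast
  have pw: "Psi (vadd u v) \<in> F" "smul (Psi (vadd u v)) g = vadd u v" using Psi_in Psi_s w by auto
  show "Psi (vadd u v) \<in> F" by (rule pw(1))
  show "P (Psi u) (Psi v) \<in> F" using Pin pu pv by blast
  show "smul (Psi (vadd u v)) g = smul (P (Psi u) (Psi v)) g" using Ps[OF pu(1) pv(1)] pu pv pw by simp
qed

lemma Psi_smul: assumes u: "u \<in> F" and aF: "\<alpha> \<in> F" shows "Psi (smul \<alpha> u) = mul \<alpha> (Psi u)"
proof (rule inj_e)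
  have pu: "Psi u \<in> F" "smul (Psi u) g = u" using Psi_in Psi_s u by auto
  have su: "smul \<alpha> u \<in> F" using smul_closed aF u by blast
  have ps: "Psi (smul \<alpha> u) \<in> F" "smul (Psi (smul \<alpha> u)) g = smul \<alpha> u" using Psi_in Psi_s su by auto
  show "Psi (smul \<alpha> u) \<in> F" by (rule ps(1))
  show "mul \<alpha> (Psi u) \<in> F" using mul_closed aF pu(1) by simp
  have "smul (mul \<alpha> (Psi u)) g = smul \<alpha> (smul (Psi u) g)" using smul_assoc[OF aF pu(1) gF] by simp
  then show "smul (Psi (smul \<alpha> u)) g = smul (mul \<alpha> (Psi u)) g" using ps(2) pu(2) by simp
qed

lemma iso: "nvs_isomorphic F vadd smul F mul szero F P mul F mul szero"
  unfolding nvs_isomorphic_def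
proof (intro exI)
  show "nvs_iso Psi id F vadd smul F mul szero F P mul F mul szero"
    unfolding nvs_iso_def bij_betw_def
    using Psi_inj Psi_img Psi_add Psi_smul by simp
qed

lemma all: "g \<in> quasi_kernel F vadd smul F \<and>
           (\<forall>\<alpha>\<in>F. \<forall>\<beta>\<in>F. \<exists>!\<delta>. \<delta> \<in> F \<and> vadd (smul \<alpha> g) (smul \<beta> g) = smul \<delta> g) \<and>
           left_near_field F P mul szero \<and>
           near_vector_space F P szero mul F mul sone szero neg1 \<and>
           nvs_isomorphic F vadd smul F mul szero F P mul F mul szero"
proof (intro conjI ballI)
  show "g \<in> quasi_kernel F vadd smul F" using QVall gF by simp
  fix \<alpha> \<beta> assume "\<alpha> \<in> F" "\<beta> \<in> F"
  then show "\<exists>!\<delta>. \<delta> \<in> F \<and> vadd (smul \<alpha> g) (smul \<beta> g) = smul \<delta> g"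
    using QV[OF gF] inj_e by metis
qed (rule lnf, rule nvsP, rule iso)

end

theorem mainTheorem8:
  fixes F :: "'a set" and mul vadd smul :: "'a \<Rightarrow> 'a \<Rightarrow> 'a"
    and sone szero neg1 vzero :: 'a
  assumes nvs: "near_vector_space F vadd vzero smul F mul sone szero neg1"
    and span: "{smul \<alpha> sone | \<alpha>. \<alpha> \<in> F} = F"
  shows "\<forall>\<gamma>\<in>F - {vzero}.
           \<gamma> \<in> quasi_kernel F vadd smul F \<and>
           (\<forall>\<alpha>\<in>F. \<forall>\<beta>\<in>F. \<exists>!\<delta>. \<delta> \<in> F \<and> vadd (smul \<alpha> \<gamma>) (smul \<beta> \<gamma>) = smul \<delta> \<gamma>) \<and>
           left_near_field F (qk_plus vadd smul F \<gamma>) mul szero \<and>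
           near_vector_space F (qk_plus vadd smul F \<gamma>) szero mul F mul sone szero neg1 \<and>
           nvs_isomorphic F vadd smul F mul szero
                          F (qk_plus vadd smul F \<gamma>) mul F mul szero"
proof
  fix \<gamma> assume "\<gamma> \<in> F - {vzero}"
  then interpret nv8g F mul vadd smul sone szero neg1 vzero \<gamma>
    using nvs span by unfold_locales auto
  show "\<gamma> \<in> quasi_kernel F vadd smul F \<and>
           (\<forall>\<alpha>\<in>F. \<forall>\<beta>\<in>F. \<exists>!\<delta>. \<delta> \<in> F \<and> vadd (smul \<alpha> \<gamma>) (smul \<beta> \<gamma>) = smul \<delta> \<gamma>) \<and>
           left_near_field F (qk_plus vadd smul F \<gamma>) mul szero \<and>
           near_vector_space F (qk_plus vadd smul F \<gamma>) szero mul F mul sone szero neg1 \<and>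
           nvs_isomorphic F vadd smul F mul szero
                          F (qk_plus vadd smul F \<gamma>) mul F mul szero" by (rule all)
qed

end
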